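(* Let $\mu\in\mathbb{R}$, $c\ge 0$, $\sigma>0$, $\eta_c>0$, $\eta_s>0$. Let $u_c^*$ be the optimal value of $$\max_{p_0\in\mathbb{R},\,r\in[0,1]}\; p_0+r\mu-c-\eta_c r^2\sigma^2 \quad\text{subject to}\quad (1-r)\mu-p_0-\eta_s(1-r)^2\sigma^2\ge 0,$$ and let $u_{c,r=0}^*$ be the optimal value of the same problem with $r$ fixed to $0$ (so $u_{c,r=0}^*=\mu-c-\eta_s\sigma^2$). Then $$\Delta:=u_c^*-u_{c,r=0}^*=\sigma^2\frac{\eta_s^2}{\eta_s+\eta_c},$$ and $\Delta$ is increasing in $\sigma$, increasing in $\eta_s$, and decreasing in $\eta_c$.
   Context: Interpretation: a creator (cost $c$) sells an NFT at mint price $p_0$ with royalty rate $r$ to a speculator, who resells it to an end-buyer at the realized valuation $V$ with $\mathbb{E}[V]=\mu$, $\mathrm{Var}(V)=\sigma^2$. Creator profit is $p_0+rV-c$, speculator profit is $(1-r)V-p_0$; both agents have mean-variance utility $\mathbb{E}[\text{profit}]-\eta\,\mathrm{Var}[\text{profit}]$ with risk-aversion coefficients $\eta_c$ (creator) and $\eta_s$ (speculator). The constraint is the speculator's participation constraint. *)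

theory Defs
  imports Complex_Main
begin

definition creator_obj :: "real \<Rightarrow> real \<Rightarrow> real \<Rightarrow> real \<Rightarrow> real \<Rightarrow> real \<Rightarrow> real" where
  "creator_obj mu c sigma eta_c p0 r = p0 + r * mu - c - eta_c * r\<^sup>2 * sigma\<^sup>2"

definition spec_participates :: "real \<Rightarrow> real \<Rightarrow> real \<Rightarrow> real \<Rightarrow> real \<Rightarrow> bool" where
  "spec_participates mu sigma eta_s p0 r \<longleftrightarrow> (1 - r) * mu - p0 - eta_s * (1 - r)\<^sup>2 * sigma\<^sup>2 \<ge> 0"

definition u_star :: "real \<Rightarrow> real \<Rightarrow> real \<Rightarrow> real \<Rightarrow> real \<Rightarrow> real" where
  "u_star mu c sigma eta_s eta_c =
     Sup {creator_obj mu c sigma eta_c p0 r | p0 r. r \<in> {0..1} \<and> spec_participates mu sigma eta_s p0 r}"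

definition u_star_r0 :: "real \<Rightarrow> real \<Rightarrow> real \<Rightarrow> real \<Rightarrow> real \<Rightarrow> real" where
  "u_star_r0 mu c sigma eta_s eta_c =
     Sup {creator_obj mu c sigma eta_c p0 0 | p0. spec_participates mu sigma eta_s p0 0}"

definition royalty_gain :: "real \<Rightarrow> real \<Rightarrow> real \<Rightarrow> real \<Rightarrow> real \<Rightarrow> real" where
  "royalty_gain mu c sigma eta_s eta_c = u_star mu c sigma eta_s eta_c - u_star_r0 mu c sigma eta_s eta_c"

end

theory Submission
  imports Defs
begin

lemma ustar_val:
  fixes mu c s es ec :: real
  assumes "es > 0" "ec > 0"
  shows "u_star mu c s es ec = mu - c - s\<^sup>2 * (es * ec / (es + ec))"
proof -
  define r where "r = es / (es + ec)"
  define p where "p = (1 - r) * mu - es * (1 - r)\<^sup>2 * s\<^sup>2"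
  have r01: "r \<in> {0..1}" using assms by (auto simp: r_def field_simps)
  have ident: "(es + ec) * (es * (1 - t)\<^sup>2 + ec * t\<^sup>2) - es * ec = (es - (es + ec) * t)\<^sup>2" for t :: real
    by (simp add: power2_eq_square algebra_simps)
  have rr: "(es + ec) * r = es" using assms by (simp add: r_def)
  have key: "es * (1 - r)\<^sup>2 + ec * r\<^sup>2 = es * ec / (es + ec)"
  proof -
    have "(es + ec) * (es * (1 - r)\<^sup>2 + ec * r\<^sup>2) = es * ec" using ident[of r] rr by simp
    thus ?thesis using assms by (simp add: eq_divide_eq mult.commute)
  qed
  have bound: "es * (1 - t)\<^sup>2 + ec * t\<^sup>2 \<ge> es * ec / (es + ec)" for t :: real
  proof -
    have "(es + ec) * (es * (1 - t)\<^sup>2 + ec * t\<^sup>2) - es * ec = (es - (es + ec) * t)\<^sup>2"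
      by (simp add: power2_eq_square algebra_simps)
    hence "(es + ec) * (es * (1 - t)\<^sup>2 + ec * t\<^sup>2) \<ge> es * ec" by (metis diff_ge_0_iff_ge zero_le_power2)
    thus ?thesis using assms by (simp add: divide_le_eq mult.commute)
  qed
  show ?thesis unfolding u_star_def
  proof (rule cSup_eq_maximum)
    show "mu - c - s\<^sup>2 * (es * ec / (es + ec)) \<in> {creator_obj mu c s ec p0 r |p0 r. r \<in> {0..1} \<and> spec_participates mu s es p0 r}"
      apply (rule CollectI, rule exI[of _ p], rule exI[of _ r])
      using r01 key[symmetric] by (simp add: creator_obj_def spec_participates_def p_def algebra_simps)
  next
    fix x assume "x \<in> {creator_obj mu c s ec p0 r |p0 r. r \<in> {0..1} \<and> spec_participates mu s es p0 r}"
    then obtain p0 t where x: "x = creator_obj mu c s ec p0 t" and sp: "spec_participates mu s es p0 t" by blast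
    have "x \<le> mu - c - s\<^sup>2 * (es * (1 - t)\<^sup>2 + ec * t\<^sup>2)"
      using sp by (simp add: x creator_obj_def spec_participates_def algebra_simps)
    also have "\<dots> \<le> mu - c - s\<^sup>2 * (es * ec / (es + ec))"
      using mult_left_mono[OF bound[of t], of "s\<^sup>2"] by simp
    finally show "x \<le> mu - c - s\<^sup>2 * (es * ec / (es + ec))" .
  qed
qed

lemma ustar0_val:
  fixes mu c s es ec :: real
  shows "u_star_r0 mu c s es ec = mu - c - es * s\<^sup>2"
  unfolding u_star_r0_def
proof (rule cSup_eq_maximum)
  show "mu - c - es * s\<^sup>2 \<in> {creator_obj mu c s ec p0 0 |p0. spec_participates mu s es p0 0}"
    by (rule CollectI, rule exI[of _ "mu - es * s\<^sup>2"]) (simp add: creator_obj_def spec_participates_def)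
next
  fix x assume "x \<in> {creator_obj mu c s ec p0 0 |p0. spec_participates mu s es p0 0}"
  thus "x \<le> mu - c - es * s\<^sup>2" by (auto simp: creator_obj_def spec_participates_def)
qed

lemma gain_val:
  fixes mu c s es ec :: real
  assumes "es > 0" "ec > 0"
  shows "royalty_gain mu c s es ec = s\<^sup>2 * (es\<^sup>2 / (es + ec))"
proof -
  have "es - es * ec / (es + ec) = es\<^sup>2 / (es + ec)"
    using assms by (simp add: field_simps power2_eq_square)
  hence "s\<^sup>2 * es - s\<^sup>2 * (es * ec / (es + ec)) = s\<^sup>2 * (es\<^sup>2 / (es + ec))"
    by (metis right_diff_distrib)
  thus ?thesis unfolding royalty_gain_def ustar_val[OF assms] ustar0_val
    by (simp add: algebra_simps)
qed

theorem theorem2: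
  fixes mu c sigma eta_s eta_c :: real
  assumes "c \<ge> 0" "sigma > 0" "eta_c > 0" "eta_s > 0"
  shows "royalty_gain mu c sigma eta_s eta_c = sigma\<^sup>2 * (eta_s\<^sup>2 / (eta_s + eta_c))
    \<and> (\<forall>s1 s2. 0 < s1 \<and> s1 < s2 \<longrightarrow>
           royalty_gain mu c s1 eta_s eta_c < royalty_gain mu c s2 eta_s eta_c)
    \<and> (\<forall>e1 e2. 0 < e1 \<and> e1 < e2 \<longrightarrow>
           royalty_gain mu c sigma e1 eta_c < royalty_gain mu c sigma e2 eta_c)
    \<and> (\<forall>e1 e2. 0 < e1 \<and> e1 < e2 \<longrightarrow>
           royalty_gain mu c sigma eta_s e2 < royalty_gain mu c sigma eta_s e1)"
proof (intro conjI allI impI)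
  show "royalty_gain mu c sigma eta_s eta_c = sigma\<^sup>2 * (eta_s\<^sup>2 / (eta_s + eta_c))"
    using gain_val assms by simp
next
  fix s1 s2 :: real assume h: "0 < s1 \<and> s1 < s2"
  have "s1\<^sup>2 < s2\<^sup>2" using h by (simp add: power_strict_mono)
  moreover have "eta_s\<^sup>2 / (eta_s + eta_c) > 0" using assms by simp
  ultimately have "s1\<^sup>2 * (eta_s\<^sup>2 / (eta_s + eta_c)) < s2\<^sup>2 * (eta_s\<^sup>2 / (eta_s + eta_c))"
    by (rule mult_strict_right_mono)
  thus "royalty_gain mu c s1 eta_s eta_c < royalty_gain mu c s2 eta_s eta_c"
    using assms by (simp only: gain_val)
next
  fix e1 e2 :: real assume h: "0 < e1 \<and> e1 < e2"
  have "e1\<^sup>2 / (e1 + eta_c) < e2\<^sup>2 / (e2 + eta_c)"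
  proof -
    have "e1\<^sup>2 * (e2 + eta_c) < e2\<^sup>2 * (e1 + eta_c)"
    proof -
      have "e2\<^sup>2 * (e1 + eta_c) - e1\<^sup>2 * (e2 + eta_c) = (e2 - e1) * (e1 * e2 + eta_c * (e1 + e2))"
        by (simp add: power2_eq_square algebra_simps)
      moreover have "(e2 - e1) * (e1 * e2 + eta_c * (e1 + e2)) > 0"
        using h assms by (intro mult_pos_pos add_pos_pos) auto
      ultimately show ?thesis by linarith
    qed
    thus ?thesis using h assms by (simp add: divide_less_eq less_divide_eq mult.commute)
  qed
  hence "sigma\<^sup>2 * (e1\<^sup>2 / (e1 + eta_c)) < sigma\<^sup>2 * (e2\<^sup>2 / (e2 + eta_c))"
    using assms by (intro mult_strict_left_mono) auto
  moreover have "e2 > 0" using h by linarith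
  ultimately show "royalty_gain mu c sigma e1 eta_c < royalty_gain mu c sigma e2 eta_c"
    using assms h by (simp only: gain_val)
next
  fix e1 e2 :: real assume h: "0 < e1 \<and> e1 < e2"
  have "eta_s\<^sup>2 / (eta_s + e2) < eta_s\<^sup>2 / (eta_s + e1)"
    using h assms by (intro divide_strict_left_mono) auto
  hence "sigma\<^sup>2 * (eta_s\<^sup>2 / (eta_s + e2)) < sigma\<^sup>2 * (eta_s\<^sup>2 / (eta_s + e1))"
    using assms by (intro mult_strict_left_mono) auto
  moreover have "e2 > 0" using h by linarith
  ultimately show "royalty_gain mu c sigma eta_s e2 < royalty_gain mu c sigma eta_s e1"
    using assms h by (simp only: gain_val)
qed

end
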